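(* Let $(A,\succ,\prec)$ be a finite-dimensional dendriform algebra with associated product $x*y=x\succ y+x\prec y$, and let $r\in A\otimes A$ be symmetric and nondegenerate (i.e. the induced map $r:A^*\to A$ is bijective). Define $\mathcal B(x,y)=\langle r^{-1}(x),y\rangle$ for $x,y\in A$. Then $r$ satisfies the $D$-equation $r_{12}*r_{13}=r_{13}\prec r_{23}+r_{23}\succ r_{12}$ if and only if $$\mathcal B(x*y,z)=\mathcal B(y,z\prec x)+\mathcal B(x,y\succ z)\quad\text{for all }x,y,z\in A.$$
   Context: A dendriform algebra is a vector space with bilinear products $\prec,\succ$ such that, writing $x*y=x\prec y+x\succ y$: $(x\prec y)\prec z=x\prec(y*z)$, $(x\succ y)\prec z=x\succ(y\prec z)$, $x\succ(y\succ z)=(x*y)\succ z$. Symmetric means $\sigma(r)=r$ where $\sigma(u\otimes v)=v\otimes u$. $r$ is regarded as a linear map $A^*\to A$ by $\langle u^*\otimes v^*,r\rangle=\langle u^*,r(v^* )\rangle$. For $r=\sum_i x_i\otimes y_i$: $r_{12}*r_{13}=\sum_{i,j}x_i*x_j\otimes y_i\otimes y_j$, $r_{13}\prec r_{23}=\sum_{i,j}x_i\otimes x_j\otimes y_i\prec y_j$, $r_{23}\succ r_{12}=\sum_{i,j}x_j\otimes x_i\succ y_j\otimes y_i$. *)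

theory Defs
  imports Main
begin

text \<open>A finite-dimensional vector space over a field 'k is modelled in coordinates as
  'n \<Rightarrow> 'k with 'n a finite index type (basis e i). The dual space A* is identified with
  'n \<Rightarrow> 'k via the dual basis, with pairing dpair. Tensors in A\<otimes>A and A\<otimes>A\<otimes>A are
  their coefficient arrays.\<close>

type_synonym ('n, 'k) vect = "'n \<Rightarrow> 'k"

definition vadd :: "('n, 'k::field) vect \<Rightarrow> ('n, 'k) vect \<Rightarrow> ('n, 'k) vect" where
  "vadd x y = (\<lambda>i. x i + y i)"

definition smul :: "'k::field \<Rightarrow> ('n, 'k) vect \<Rightarrow> ('n, 'k) vect" where
  "smul c x = (\<lambda>i. c * x i)"

definition basisv :: "'n \<Rightarrow> ('n, 'k::field) vect" where
  "basisv i = (\<lambda>j. if j = i then 1 else 0)"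

definition bilinear_op :: "(('n, 'k::field) vect \<Rightarrow> ('n, 'k) vect \<Rightarrow> ('n, 'k) vect) \<Rightarrow> bool" where
  "bilinear_op m \<longleftrightarrow>
     (\<forall>x y z. m (vadd x y) z = vadd (m x z) (m y z)) \<and>
     (\<forall>x y z. m x (vadd y z) = vadd (m x y) (m x z)) \<and>
     (\<forall>c x y. m (smul c x) y = smul c (m x y)) \<and>
     (\<forall>c x y. m x (smul c y) = smul c (m x y))"

definition dstar :: "(('n, 'k::field) vect \<Rightarrow> ('n, 'k) vect \<Rightarrow> ('n, 'k) vect) \<Rightarrow>
    (('n, 'k) vect \<Rightarrow> ('n, 'k) vect \<Rightarrow> ('n, 'k) vect) \<Rightarrow> ('n, 'k) vect \<Rightarrow> ('n, 'k) vect \<Rightarrow> ('n, 'k) vect" where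
  "dstar prec succ x y = vadd (prec x y) (succ x y)"

definition dendriform :: "(('n, 'k::field) vect \<Rightarrow> ('n, 'k) vect \<Rightarrow> ('n, 'k) vect) \<Rightarrow>
    (('n, 'k) vect \<Rightarrow> ('n, 'k) vect \<Rightarrow> ('n, 'k) vect) \<Rightarrow> bool" where
  "dendriform prec succ \<longleftrightarrow> bilinear_op prec \<and> bilinear_op succ \<and>
     (\<forall>x y z. prec (prec x y) z = prec x (dstar prec succ y z)) \<and>
     (\<forall>x y z. prec (succ x y) z = succ x (prec y z)) \<and>
     (\<forall>x y z. succ x (succ y z) = succ (dstar prec succ x y) z)"

text \<open>Decomposition r = \<Sum>_(i,j) (r i j \<cdot> e_i) \<otimes> e_j.\<close>

definition rx :: "('n \<Rightarrow> 'n \<Rightarrow> 'k::field) \<Rightarrow> 'n \<times> 'n \<Rightarrow> ('n, 'k) vect" where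
  "rx r p = smul (r (fst p) (snd p)) (basisv (fst p))"

definition ry :: "('n \<Rightarrow> 'n \<Rightarrow> 'k::field) \<Rightarrow> 'n \<times> 'n \<Rightarrow> ('n, 'k) vect" where
  "ry r p = basisv (snd p)"

definition r12_star_r13 where
  "r12_star_r13 prec succ (r :: 'n::finite \<Rightarrow> 'n \<Rightarrow> 'k::field) =
     (\<lambda>a b c. \<Sum>p\<in>UNIV. \<Sum>q\<in>UNIV.
        dstar prec succ (rx r p) (rx r q) a * ry r p b * ry r q c)"

definition r13_prec_r23 where
  "r13_prec_r23 prec (r :: 'n::finite \<Rightarrow> 'n \<Rightarrow> 'k::field) =
     (\<lambda>a b c. \<Sum>p\<in>UNIV. \<Sum>q\<in>UNIV.
        rx r p a * rx r q b * prec (ry r p) (ry r q) c)"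

definition r23_succ_r12 where
  "r23_succ_r12 succ (r :: 'n::finite \<Rightarrow> 'n \<Rightarrow> 'k::field) =
     (\<lambda>a b c. \<Sum>p\<in>UNIV. \<Sum>q\<in>UNIV.
        rx r q a * succ (rx r p) (ry r q) b * ry r p c)"

definition D_equation where
  "D_equation prec succ (r :: 'n::finite \<Rightarrow> 'n \<Rightarrow> 'k::field) \<longleftrightarrow>
     r12_star_r13 prec succ r =
       (\<lambda>a b c. r13_prec_r23 prec r a b c + r23_succ_r12 succ r a b c)"

definition dpair :: "('n::finite, 'k::field) vect \<Rightarrow> ('n, 'k) vect \<Rightarrow> 'k" where
  "dpair u x = (\<Sum>i\<in>UNIV. u i * x i)"

text \<open>r as a map A* \<rightarrow> A: \<langle>u*\<otimes>v*, r\<rangle> = \<langle>u*, r(v*)\<rangle>.\<close>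
definition rmap :: "('n::finite \<Rightarrow> 'n \<Rightarrow> 'k::field) \<Rightarrow> ('n, 'k) vect \<Rightarrow> ('n, 'k) vect" where
  "rmap r v = (\<lambda>i. \<Sum>j\<in>UNIV. r i j * v j)"

definition tensor_symmetric :: "('n \<Rightarrow> 'n \<Rightarrow> 'k) \<Rightarrow> bool" where
  "tensor_symmetric r \<longleftrightarrow> (\<forall>i j. r i j = r j i)"

definition bform :: "('n::finite \<Rightarrow> 'n \<Rightarrow> 'k::field) \<Rightarrow> ('n, 'k) vect \<Rightarrow> ('n, 'k) vect \<Rightarrow> 'k" where
  "bform r x y = dpair (inv (rmap r) x) y"

end

theory Submission imports Defs begin

lemma bil_zero_left:
  assumes "bilinear_op m" shows "m (\<lambda>i. 0) y = (\<lambda>a. 0)"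
proof -
  have "m (smul 0 y) y = smul 0 (m y y)" using assms by (simp add: bilinear_op_def)
  moreover have "smul 0 y = (\<lambda>i. 0)" by (simp add: smul_def)
  ultimately show ?thesis by (simp add: smul_def)
qed

lemma lin_left:
  assumes "bilinear_op m" "finite S"
  shows "m (\<lambda>i. \<Sum>s\<in>S. c s * f s i) y a = (\<Sum>s\<in>S. c s * m (f s) y a)"
  using assms(2)
proof (induction S arbitrary: a rule: finite_induct)
  case empty
  then show ?case using bil_zero_left[OF assms(1)] by simp
next
  case (insert x F)
  have e: "(\<lambda>i. \<Sum>s\<in>insert x F. c s * f s i) = vadd (smul (c x) (f x)) (\<lambda>i. \<Sum>s\<in>F. c s * f s i)"
    using insert by (simp add: vadd_def smul_def)
  show ?case using insert assms(1) unfolding e by (simp add: bilinear_op_def vadd_def smul_def)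
qed

lemma bil_zero_right:
  assumes "bilinear_op m" shows "m x (\<lambda>i. 0) = (\<lambda>a. 0)"
proof -
  have "m x (smul 0 x) = smul 0 (m x x)" using assms by (simp add: bilinear_op_def)
  moreover have "smul 0 x = (\<lambda>i. 0)" by (simp add: smul_def)
  ultimately show ?thesis by (simp add: smul_def)
qed

lemma lin_right:
  assumes "bilinear_op m" "finite S"
  shows "m x (\<lambda>i. \<Sum>s\<in>S. c s * f s i) a = (\<Sum>s\<in>S. c s * m x (f s) a)"
  using assms(2)
proof (induction S arbitrary: a rule: finite_induct)
  case empty
  then show ?case using bil_zero_right[OF assms(1)] by simp
next
  case (insert x' F)
  have e: "(\<lambda>i. \<Sum>s\<in>insert x' F. c s * f s i) = vadd (smul (c x') (f x')) (\<lambda>i. \<Sum>s\<in>F. c s * f s i)"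
    using insert by (simp add: vadd_def smul_def)
  show ?case using insert assms(1) unfolding e by (simp add: bilinear_op_def vadd_def smul_def)
qed

lemma bil_dstar: "bilinear_op p \<Longrightarrow> bilinear_op s \<Longrightarrow> bilinear_op (dstar p s)"
  unfolding bilinear_op_def dstar_def by (auto simp: vadd_def smul_def algebra_simps)


lemma F1: "(\<lambda>i. \<Sum>p\<in>UNIV. ry r p b * rx r p i) = (\<lambda>i. r i (b::'n::finite) :: 'k::field)"
proof
  fix i
  have "(\<Sum>p\<in>UNIV. ry r p b * rx r p i) = (\<Sum>p\<in>(UNIV::'n set) \<times> (UNIV::'n set). ry r p b * rx r p i)"
    by simp
  also have "\<dots> = (\<Sum>x\<in>UNIV. \<Sum>y\<in>UNIV. ry r (x,y) b * rx r (x,y) i)"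
    by (rule sum.cartesian_product')
  also have "\<dots> = (\<Sum>x\<in>UNIV. \<Sum>y\<in>UNIV. (if y = b then (if x = i then r x y else 0) else 0))"
    by (rule sum.cong[OF refl], rule sum.cong[OF refl]) (auto simp: ry_def rx_def smul_def basisv_def)
  also have "\<dots> = r i b" by simp
  finally show "(\<Sum>p\<in>UNIV. ry r p b * rx r p i) = r i b" .
qed

lemma F2: "tensor_symmetric r \<Longrightarrow> (\<lambda>j. \<Sum>p\<in>UNIV. rx r p a * ry r p j) = (\<lambda>i. r i (a::'n::finite) :: 'k::field)"
proof
  fix i assume sy: "tensor_symmetric r"
  have "(\<Sum>p\<in>UNIV. rx r p a * ry r p i) = (\<Sum>p\<in>(UNIV::'n set) \<times> (UNIV::'n set). rx r p a * ry r p i)"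
    by simp
  also have "\<dots> = (\<Sum>x\<in>UNIV. \<Sum>y\<in>UNIV. rx r (x,y) a * ry r (x,y) i)"
    by (rule sum.cartesian_product')
  also have "\<dots> = (\<Sum>x\<in>UNIV. \<Sum>y\<in>UNIV. (if y = i then (if x = a then r x y else 0) else 0))"
    by (rule sum.cong[OF refl], rule sum.cong[OF refl]) (auto simp: ry_def rx_def smul_def basisv_def)
  also have "\<dots> = r i a" using sy by (simp add: tensor_symmetric_def)
  finally show "(\<Sum>p\<in>UNIV. rx r p a * ry r p i) = r i a" .
qed


lemma Dchar:
  fixes prec succ :: "('n::finite \<Rightarrow> 'k::field) \<Rightarrow> ('n \<Rightarrow> 'k) \<Rightarrow> ('n \<Rightarrow> 'k)"
    and r :: "'n \<Rightarrow> 'n \<Rightarrow> 'k"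
  assumes bp: "bilinear_op prec" and bs: "bilinear_op succ" and sy: "tensor_symmetric r"
  shows "D_equation prec succ r \<longleftrightarrow> (\<forall>a b c. dstar prec succ (\<lambda>i. r i b) (\<lambda>i. r i c) a
      = prec (\<lambda>i. r i a) (\<lambda>i. r i b) c + succ (\<lambda>i. r i c) (\<lambda>i. r i a) b)"
proof -
  have bd: "bilinear_op (dstar prec succ)" using bp bs by (rule bil_dstar)
  have L: "r12_star_r13 prec succ r a b c = dstar prec succ (\<lambda>i. r i b) (\<lambda>i. r i c) a" for a b c
  proof -
    have "dstar prec succ (\<lambda>i. r i b) (\<lambda>i. r i c) a =
      dstar prec succ (\<lambda>i. \<Sum>p\<in>UNIV. ry r p b * rx r p i) (\<lambda>i. \<Sum>p\<in>UNIV. ry r p c * rx r p i) a"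
      by (simp only: F1)
    also have "\<dots> = (\<Sum>p\<in>UNIV. ry r p b * (\<Sum>q\<in>UNIV. ry r q c * dstar prec succ (rx r p) (rx r q) a))"
      by (simp only: lin_left[OF bd] lin_right[OF bd] finite)
    finally show ?thesis by (simp add: r12_star_r13_def sum_distrib_left mult_ac)
  qed
  have M: "r13_prec_r23 prec r a b c = prec (\<lambda>i. r i a) (\<lambda>i. r i b) c" for a b c
  proof -
    have "prec (\<lambda>i. r i a) (\<lambda>i. r i b) c =
      prec (\<lambda>i. \<Sum>p\<in>UNIV. rx r p a * ry r p i) (\<lambda>i. \<Sum>p\<in>UNIV. rx r p b * ry r p i) c"
      by (simp only: F2[OF sy])
    also have "\<dots> = (\<Sum>p\<in>UNIV. rx r p a * (\<Sum>q\<in>UNIV. rx r q b * prec (ry r p) (ry r q) c))"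
      by (simp only: lin_left[OF bp] lin_right[OF bp] finite)
    finally show ?thesis by (simp add: r13_prec_r23_def sum_distrib_left mult_ac)
  qed
  have N: "r23_succ_r12 succ r a b c = succ (\<lambda>i. r i c) (\<lambda>i. r i a) b" for a b c
  proof -
    have "succ (\<lambda>i. r i c) (\<lambda>i. r i a) b =
      succ (\<lambda>i. \<Sum>p\<in>UNIV. ry r p c * rx r p i) (\<lambda>i. \<Sum>p\<in>UNIV. rx r p a * ry r p i) b"
      by (simp only: F1 F2[OF sy])
    also have "\<dots> = (\<Sum>p\<in>UNIV. ry r p c * (\<Sum>q\<in>UNIV. rx r q a * succ (rx r p) (ry r q) b))"
      by (simp only: lin_left[OF bs] lin_right[OF bs] finite)
    finally show ?thesis by (simp add: r23_succ_r12_def sum_distrib_left mult_ac)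
  qed
  show ?thesis unfolding D_equation_def fun_eq_iff L M N ..
qed


lemma dp_sym: "tensor_symmetric r \<Longrightarrow> dpair (rmap r v) u = dpair v (rmap r u)"
proof -
  assume sy: "tensor_symmetric r"
  have "dpair (rmap r v) u = (\<Sum>i\<in>UNIV. \<Sum>j\<in>UNIV. u i * r i j * v j)"
    by (simp add: dpair_def rmap_def sum_distrib_left sum_distrib_right mult_ac)
  also have "\<dots> = (\<Sum>j\<in>UNIV. \<Sum>i\<in>UNIV. u i * r i j * v j)" by (rule sum.swap)
  also have "\<dots> = dpair v (rmap r u)"
    using sy by (simp add: dpair_def rmap_def sum_distrib_left sum_distrib_right mult_ac tensor_symmetric_def)
  finally show ?thesis .
qed

lemma dp_basis1: "dpair X (basisv a) = X a"
proof -
  have "dpair X (basisv a) = (\<Sum>i\<in>UNIV. if i = a then X i else 0)"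
    unfolding dpair_def basisv_def by (rule sum.cong) auto
  then show ?thesis by simp
qed
lemma dp_basis2: "dpair (basisv a) X = X a"
proof -
  have "dpair (basisv a) X = (\<Sum>i\<in>UNIV. if i = a then X i else 0)"
    unfolding dpair_def basisv_def by (rule sum.cong) auto
  then show ?thesis by simp
qed
lemma rmap_basis: "rmap r (basisv b) = (\<lambda>i. r i b)"
proof
  fix i
  have "rmap r (basisv b) i = (\<Sum>j\<in>UNIV. if j = b then r i j else 0)"
    unfolding rmap_def basisv_def by (rule sum.cong) auto
  then show "rmap r (basisv b) i = r i b" by simp
qed
lemma rmap_expand: "rmap r v = (\<lambda>i. \<Sum>b\<in>UNIV. v b * r i b)" by (simp add: rmap_def mult_ac)

theorem theorem4p4p7:
  fixes prec succ :: "('n::finite \<Rightarrow> 'k::field) \<Rightarrow> ('n \<Rightarrow> 'k) \<Rightarrow> ('n \<Rightarrow> 'k)"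
    and r :: "'n \<Rightarrow> 'n \<Rightarrow> 'k"
  assumes "dendriform prec succ"
    and "tensor_symmetric r"
    and "bij (rmap r)"
  shows "D_equation prec succ r \<longleftrightarrow>
    (\<forall>x y z. bform r (dstar prec succ x y) z = bform r y (prec z x) + bform r x (succ y z))"
proof -
  have bp: "bilinear_op prec" and bs: "bilinear_op succ" using assms(1) by (auto simp: dendriform_def)
  have bd: "bilinear_op (dstar prec succ)" using bp bs by (rule bil_dstar)
  have sy: "tensor_symmetric r" by fact
  define R where "R = rmap r"
  define S where "S = inv R"
  have RS: "R (S x) = x" for x unfolding R_def S_def by (rule surj_f_inv_f[OF bij_is_surj[OF assms(3)]])
  have SR: "S (R x) = x" for x unfolding R_def S_def by (rule inv_f_f[OF bij_is_inj[OF assms(3)]])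
  have bf: "bform r x y = dpair (S x) y" for x y by (simp add: bform_def S_def R_def)
  have dps: "dpair (R v) u = dpair v (R u)" for v u unfolding R_def using sy by (rule dp_sym)
  let ?K = "\<lambda>b. (\<lambda>i. r i b)"
  have RK: "R (basisv b) = ?K b" for b by (simp add: R_def rmap_basis)
  have SK: "S (?K b) = basisv b" for b using SR[of "basisv b"] RK[of b] by simp
  have Sz: "dpair (S X) z = dpair X (S z)" for X z
    using dps[of "S X" "S z"] RS by simp
  show ?thesis unfolding Dchar[OF bp bs sy] bf
  proof
    assume H: "\<forall>a b c. dstar prec succ (?K b) (?K c) a = prec (?K a) (?K b) c + succ (?K c) (?K a) b"
    show "\<forall>x y z. dpair (S (dstar prec succ x y)) z = dpair (S y) (prec z x) + dpair (S x) (succ y z)"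
    proof (intro allI)
      fix x y z
      define u v w where "u = S z" and "v = S x" and "w = S y"
      have x: "x = (\<lambda>i. \<Sum>b\<in>UNIV. v b * ?K b i)" using RS[of x] unfolding v_def R_def rmap_expand by simp
      have y: "y = (\<lambda>i. \<Sum>b\<in>UNIV. w b * ?K b i)" using RS[of y] unfolding w_def R_def rmap_expand by simp
      have z: "z = (\<lambda>i. \<Sum>b\<in>UNIV. u b * ?K b i)" using RS[of z] unfolding u_def R_def rmap_expand by simp
      have "dpair (S (dstar prec succ x y)) z = dpair (dstar prec succ x y) u" unfolding u_def by (rule Sz)
      also have "\<dots> = (\<Sum>a\<in>UNIV. (\<Sum>b\<in>UNIV. v b * (\<Sum>c\<in>UNIV. w c * dstar prec succ (?K b) (?K c) a)) * u a)"
        unfolding dpair_def by (subst x, subst y, simp only: lin_left[OF bd] lin_right[OF bd] finite)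
      also have "\<dots> = (\<Sum>a\<in>UNIV. \<Sum>b\<in>UNIV. \<Sum>c\<in>UNIV. u a * v b * w c * prec (?K a) (?K b) c)
          + (\<Sum>a\<in>UNIV. \<Sum>b\<in>UNIV. \<Sum>c\<in>UNIV. u a * v b * w c * succ (?K c) (?K a) b)"
        using H by (simp add: sum_distrib_left sum_distrib_right sum.distrib algebra_simps)
      also have "(\<Sum>a\<in>UNIV. \<Sum>b\<in>UNIV. \<Sum>c\<in>UNIV. u a * v b * w c * prec (?K a) (?K b) c)
          = dpair w (prec z x)"
      proof -
        have "dpair w (prec z x) = (\<Sum>c\<in>UNIV. w c * (\<Sum>a\<in>UNIV. u a * (\<Sum>b\<in>UNIV. v b * prec (?K a) (?K b) c)))"
          unfolding dpair_def by (subst z, subst x, simp only: lin_left[OF bp] lin_right[OF bp] finite)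
        also have "\<dots> = (\<Sum>c\<in>UNIV. \<Sum>a\<in>UNIV. \<Sum>b\<in>UNIV. u a * v b * w c * prec (?K a) (?K b) c)"
          by (simp add: sum_distrib_left mult_ac)
        also have "\<dots> = (\<Sum>a\<in>UNIV. \<Sum>c\<in>UNIV. \<Sum>b\<in>UNIV. u a * v b * w c * prec (?K a) (?K b) c)"
          by (rule sum.swap)
        also have "\<dots> = (\<Sum>a\<in>UNIV. \<Sum>b\<in>UNIV. \<Sum>c\<in>UNIV. u a * v b * w c * prec (?K a) (?K b) c)"
          by (rule sum.cong[OF refl], rule sum.swap)
        finally show ?thesis by simp
      qed
      also have "(\<Sum>a\<in>UNIV. \<Sum>b\<in>UNIV. \<Sum>c\<in>UNIV. u a * v b * w c * succ (?K c) (?K a) b)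
          = dpair v (succ y z)"
      proof -
        have "dpair v (succ y z) = (\<Sum>b\<in>UNIV. v b * (\<Sum>c\<in>UNIV. w c * (\<Sum>a\<in>UNIV. u a * succ (?K c) (?K a) b)))"
          unfolding dpair_def by (subst y, subst z, simp only: lin_left[OF bs] lin_right[OF bs] finite)
        also have "\<dots> = (\<Sum>b\<in>UNIV. \<Sum>c\<in>UNIV. \<Sum>a\<in>UNIV. u a * v b * w c * succ (?K c) (?K a) b)"
          by (simp add: sum_distrib_left mult_ac)
        also have "\<dots> = (\<Sum>b\<in>UNIV. \<Sum>a\<in>UNIV. \<Sum>c\<in>UNIV. u a * v b * w c * succ (?K c) (?K a) b)"
          by (rule sum.cong[OF refl], rule sum.swap)
        also have "\<dots> = (\<Sum>a\<in>UNIV. \<Sum>b\<in>UNIV. \<Sum>c\<in>UNIV. u a * v b * w c * succ (?K c) (?K a) b)"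
          by (rule sum.swap)
        finally show ?thesis by simp
      qed
      finally show "dpair (S (dstar prec succ x y)) z = dpair (S y) (prec z x) + dpair (S x) (succ y z)"
        unfolding v_def w_def by simp
    qed
  next
    assume H: "\<forall>x y z. dpair (S (dstar prec succ x y)) z = dpair (S y) (prec z x) + dpair (S x) (succ y z)"
    show "\<forall>a b c. dstar prec succ (?K b) (?K c) a = prec (?K a) (?K b) c + succ (?K c) (?K a) b"
    proof (intro allI)
      fix a b c
      have "dstar prec succ (?K b) (?K c) a = dpair (S (dstar prec succ (?K b) (?K c))) (R (basisv a))"
        using dps[of "S (dstar prec succ (?K b) (?K c))" "basisv a"] by (simp add: RS dp_basis1)
      also have "\<dots> = prec (?K a) (?K b) c + succ (?K c) (?K a) b"
        using H[rule_format, of "?K b" "?K c" "?K a"] by (simp add: RK SK dp_basis2)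
      finally show "dstar prec succ (?K b) (?K c) a = prec (?K a) (?K b) c + succ (?K c) (?K a) b" .
    qed
  qed
qed

end
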